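(* Let $f\in\mathcal{A}_c(\mathbb{R})$ and $\Omega_f(s)=\int_{-\infty}^\infty v_s f$. Define the Fourier transform $\hat f$ as the second distributional derivative of $\Omega_f$, i.e. $\langle\hat f,\phi\rangle=\int_{-\infty}^\infty\Omega_f(s)\phi''(s)\,ds$ for $\phi$ in the Schwartz space $\mathcal{S}(\mathbb{R})$. Then this agrees with the Fourier transform of $f$ as a tempered distribution: for every $\phi\in\mathcal{S}(\mathbb{R})$, $\int_{-\infty}^\infty\Omega_f(s)\phi''(s)\,ds=\langle f,\hat\phi\rangle=\int_{-\infty}^\infty f\hat\phi$, where $\hat\phi(s)=\int_{-\infty}^\infty e^{-ist}\phi(t)\,dt$.
   Context: $\mathcal{B}_c(\mathbb{R})$ is the set of functions $F:[-\infty,\infty]\to\mathbb{C}$ continuous on $\mathbb{R}$ with limits $F(\pm\infty)$ existing and $F(-\infty)=0$. $\mathcal{A}_c(\mathbb{R})$ is the set of tempered distributions $f=F'$ (distributional derivative) with $F\in\mathcal{B}_c(\mathbb{R})$. For $g$ of bounded variation on $\mathbb{R}$, $\int_{-\infty}^\infty fg=F(\infty)g(\infty)-\int_{-\infty}^\infty F\,dg$. For $s,t\in\mathbb{R}$, $v_s(t)=(1-ist-e^{-ist})/t^2$ ($t\ne0$), $v_s(0)=s^2/2$. *)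

theory Defs
  imports "HOL-Analysis.Analysis"
begin

definition Bc :: "(real \<Rightarrow> complex) \<Rightarrow> bool" where
  "Bc F \<longleftrightarrow> continuous_on UNIV F \<and> (F \<longlongrightarrow> 0) at_bot \<and> (\<exists>L. (F \<longlongrightarrow> L) at_top)"

definition at_infty :: "(real \<Rightarrow> complex) \<Rightarrow> complex" where
  "at_infty g = Lim at_top g"

definition has_RS_integral ::
  "(real \<Rightarrow> complex) \<Rightarrow> (real \<Rightarrow> complex) \<Rightarrow> real \<Rightarrow> real \<Rightarrow> complex \<Rightarrow> bool" where
  "has_RS_integral F g a b I \<longleftrightarrow>
     (\<forall>\<epsilon>>0. \<exists>\<delta>>0. \<forall>(n::nat) (x::nat \<Rightarrow> real) (\<xi>::nat \<Rightarrow> real).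
        x 0 = a \<longrightarrow> x n = b \<longrightarrow>
        (\<forall>i<n. x i \<le> x (Suc i) \<and> x (Suc i) - x i < \<delta> \<and> x i \<le> \<xi> i \<and> \<xi> i \<le> x (Suc i)) \<longrightarrow>
        norm ((\<Sum>i<n. F (\<xi> i) * (g (x (Suc i)) - g (x i))) - I) < \<epsilon>)"

definition RS_integral :: "(real \<Rightarrow> complex) \<Rightarrow> (real \<Rightarrow> complex) \<Rightarrow> real \<Rightarrow> real \<Rightarrow> complex" where
  "RS_integral F g a b = (THE I. has_RS_integral F g a b I)"

definition stieltjes_integral :: "(real \<Rightarrow> complex) \<Rightarrow> (real \<Rightarrow> complex) \<Rightarrow> complex" where
  "stieltjes_integral F g = Lim (at_bot \<times>\<^sub>F at_top) (\<lambda>(a, b). RS_integral F g a b)"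

text \<open>For f = F' with F in B_c, and g of bounded variation:
  int f g = F(infinity) g(infinity) - int F dg.\<close>
definition Ac_integral :: "(real \<Rightarrow> complex) \<Rightarrow> (real \<Rightarrow> complex) \<Rightarrow> complex" where
  "Ac_integral F g = at_infty F * at_infty g - stieltjes_integral F g"

definition v :: "real \<Rightarrow> real \<Rightarrow> complex" where
  "v s t = (if t = 0 then complex_of_real (s\<^sup>2 / 2)
            else (1 - \<i> * complex_of_real (s * t) - exp (- \<i> * complex_of_real (s * t))) / complex_of_real (t\<^sup>2))"

definition Omega :: "(real \<Rightarrow> complex) \<Rightarrow> real \<Rightarrow> complex" where
  "Omega F s = Ac_integral F (v s)"

fun nderiv :: "nat \<Rightarrow> (real \<Rightarrow> complex) \<Rightarrow> real \<Rightarrow> complex" where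
  "nderiv 0 \<phi> = \<phi>"
| "nderiv (Suc n) \<phi> = (\<lambda>x. vector_derivative (nderiv n \<phi>) (at x))"

definition schwartz :: "(real \<Rightarrow> complex) \<Rightarrow> bool" where
  "schwartz \<phi> \<longleftrightarrow> (\<forall>n x. nderiv n \<phi> differentiable (at x)) \<and>
     (\<forall>m n. bounded (range (\<lambda>t. complex_of_real t ^ m * nderiv n \<phi> t)))"

definition fourier :: "(real \<Rightarrow> complex) \<Rightarrow> real \<Rightarrow> complex" where
  "fourier \<phi> s = integral UNIV (\<lambda>t. exp (- \<i> * complex_of_real (s * t)) * \<phi> t)"

end

theory Submission
  imports Defs "HOL-Probability.Sinc_Integral" "HOL-Real_Asymp.Real_Asymp"
begin

lemma prod_bot_top_nontriv: "(at_bot \<times>\<^sub>F at_top :: (real \<times> real) filter) \<noteq> bot"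
  by (simp add: prod_filter_eq_bot)

lemma ev_le_prod: "eventually (\<lambda>(a,b). a < -B \<and> B < b) (at_bot \<times>\<^sub>F at_top :: (real \<times> real) filter)"
proof -
  have "eventually (\<lambda>x. fst x < -B \<and> B < snd x) (at_bot \<times>\<^sub>F at_top :: (real \<times> real) filter)"
    by (intro eventually_prodI) (auto simp: eventually_at_bot_dense eventually_at_top_dense)
  then show ?thesis by (simp add: split_beta')
qed

lemma interval_integral_tendsto:
  fixes f :: "real \<Rightarrow> 'a::banach"
  assumes "f integrable_on UNIV"
  shows "((\<lambda>(a,b). integral {a..b} f) \<longlongrightarrow> integral UNIV f) (at_bot \<times>\<^sub>F at_top)"
proof (rule tendstoI)
  fix e :: real assume e: "e > 0"
  have "(f has_integral integral UNIV f) UNIV" using assms by auto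
  then obtain B where B: "B > 0" "\<And>a b. ball 0 B \<subseteq> cbox a b \<Longrightarrow> norm (integral (cbox a b) f - integral UNIV f) < e"
    unfolding has_integral_alt'[of f] using e by auto
  show "eventually (\<lambda>x. dist (case x of (a, b) \<Rightarrow> integral {a..b} f) (integral UNIV f) < e) (at_bot \<times>\<^sub>F at_top)"
    using ev_le_prod[of B]
  proof (rule eventually_mono)
    fix x :: "real \<times> real" assume "case x of (a, b) \<Rightarrow> a < - B \<and> B < b"
    then obtain a b where x: "x = (a,b)" "a < -B" "B < b" by auto
    have "ball 0 B \<subseteq> cbox a b" using x by (auto simp: dist_real_def)
    then show "dist (case x of (a, b) \<Rightarrow> integral {a..b} f) (integral UNIV f) < e"
      using B(2)[of a b] x by (simp add: dist_norm)
  qed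
qed

lemma ibp_UNIV_zero:
  fixes G g :: "real \<Rightarrow> 'a::banach"
  assumes "\<And>x. (G has_vector_derivative g x) (at x)"
    and "g integrable_on UNIV" and "(G \<longlongrightarrow> 0) at_top" and "(G \<longlongrightarrow> 0) at_bot"
  shows "integral UNIV g = 0"
proof -
  have L: "((\<lambda>(a,b). integral {a..b} g) \<longlongrightarrow> integral UNIV g) (at_bot \<times>\<^sub>F at_top)"
    by (rule interval_integral_tendsto[OF assms(2)])
  have "((\<lambda>x. G (snd x) - G (fst x)) \<longlongrightarrow> 0 - 0) (at_bot \<times>\<^sub>F at_top)"
    by (intro tendsto_diff filterlim_compose[OF assms(3) filterlim_snd] filterlim_compose[OF assms(4) filterlim_fst])
  then have L2: "((\<lambda>(a,b). G b - G a) \<longlongrightarrow> 0) (at_bot \<times>\<^sub>F at_top)" by (simp add: split_beta')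
  have "eventually (\<lambda>x. (\<lambda>(a,b). G b - G a) x = (\<lambda>(a,b). integral {a..b} g) x) (at_bot \<times>\<^sub>F at_top)"
    using ev_le_prod[of 0]
  proof (rule eventually_mono)
    fix x :: "real \<times> real" assume "case x of (a, b) \<Rightarrow> a < - 0 \<and> 0 < b"
    then obtain a b where x: "x = (a,b)" "a < 0" "0 < b" by auto
    have "(g has_integral G b - G a) {a..b}"
      by (rule fundamental_theorem_of_calculus) (use x assms(1) in \<open>auto intro: has_vector_derivative_at_within\<close>)
    then show "(\<lambda>(a,b). G b - G a) x = (\<lambda>(a,b). integral {a..b} g) x" using x by (simp add: integral_unique)
  qed
  from tendsto_cong[OF this] L2 have "((\<lambda>(a,b). integral {a..b} g) \<longlongrightarrow> 0) (at_bot \<times>\<^sub>F at_top)"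
    by simp
  from tendsto_unique[OF prod_bot_top_nontriv L this] show ?thesis .
qed


lemma chain_mono:
  fixes x :: "nat \<Rightarrow> real"
  assumes "\<forall>i<n. x i \<le> x (Suc i)" "i \<le> j" "j \<le> n"
  shows "x i \<le> x j"
  using assms(2,3)
proof (induction j)
  case 0 then show ?case by simp
next
  case (Suc j)
  show ?case
  proof (cases "i = Suc j")
    case False
    then have "i \<le> j" using Suc by simp
    then have "x i \<le> x j" using Suc by simp
    moreover have "x j \<le> x (Suc j)" using Suc.prems assms(1) by simp
    ultimately show ?thesis by simp
  qed simp
qed

lemma integral_chain_sum:
  fixes f :: "real \<Rightarrow> 'a::banach" and x :: "nat \<Rightarrow> real"
  assumes mono: "\<forall>i<n. x i \<le> x (Suc i)" and f: "f integrable_on {x 0..x n}"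
  shows "integral {x 0..x n} f = (\<Sum>i<n. integral {x i..x (Suc i)} f)"
proof -
  have "m \<le> n \<Longrightarrow> integral {x 0..x m} f = (\<Sum>i<m. integral {x i..x (Suc i)} f)" for m
  proof (induction m)
    case 0 then show ?case by simp
  next
    case (Suc m)
    have le1: "x 0 \<le> x m" "x m \<le> x (Suc m)" "x (Suc m) \<le> x n"
      using chain_mono[OF mono] Suc.prems by auto
    have "f integrable_on {x 0..x (Suc m)}"
      by (rule integrable_on_subinterval[OF f]) (use le1 chain_mono[OF mono, of 0 "Suc m"] Suc.prems in auto)
    then have "integral {x 0..x (Suc m)} f = integral {x 0..x m} f + integral {x m..x (Suc m)} f"
      using Henstock_Kurzweil_Integration.integral_combine[OF le1(1,2)] by metis
    then show ?case using Suc by simp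
  qed
  then show ?thesis by simp
qed

lemma RS_has:
  fixes F h g :: "real \<Rightarrow> complex"
  assumes ab: "a \<le> b" and Fc: "continuous_on {a..b} F" and h: "h absolutely_integrable_on {a..b}"
    and g: "\<And>x y. a \<le> x \<Longrightarrow> x \<le> y \<Longrightarrow> y \<le> b \<Longrightarrow> g y - g x = integral {x..y} h"
  shows "has_RS_integral F g a b (integral {a..b} (\<lambda>t. F t * h t))"
  unfolding has_RS_integral_def
proof (intro allI impI)
  fix e :: real assume e: "e > 0"
  define A where "A = integral {a..b} (\<lambda>t. norm (h t))"
  have hn: "(\<lambda>t. norm (h t)) integrable_on {a..b}" using h absolutely_integrable_on_def by blast
  have A0: "A \<ge> 0" unfolding A_def by (rule integral_nonneg[OF hn]) auto
  define e' where "e' = e / (A + 1)"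
  have e': "e' > 0" using e A0 by (simp add: e'_def)
  have "uniformly_continuous_on {a..b} F" by (rule compact_uniformly_continuous[OF Fc compact_Icc])
  then obtain d where d: "d > 0" "\<And>x x'. x \<in> {a..b} \<Longrightarrow> x' \<in> {a..b} \<Longrightarrow> dist x' x < d \<Longrightarrow> dist (F x') (F x) < e'"
    unfolding uniformly_continuous_on_def using e' by metis
  have Fh: "(\<lambda>t. F t * h t) absolutely_integrable_on {a..b}"
    by (rule absolutely_integrable_bounded_measurable_product[OF bilinear_times
        continuous_imp_measurable_on_sets_lebesgue[OF Fc] _ compact_imp_bounded[OF compact_continuous_image[OF Fc compact_Icc]] h]) auto
  show "\<exists>d>0. \<forall>n x \<xi>. x 0 = a \<longrightarrow> x n = b \<longrightarrow>
          (\<forall>i<n. x i \<le> x (Suc i) \<and> x (Suc i) - x i < d \<and> x i \<le> \<xi> i \<and> \<xi> i \<le> x (Suc i)) \<longrightarrow>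
          norm ((\<Sum>i<n. F (\<xi> i) * (g (x (Suc i)) - g (x i))) - integral {a..b} (\<lambda>t. F t * h t)) < e"
  proof (intro exI[of _ d] conjI allI impI d(1))
    fix n x \<xi> assume x0: "x 0 = (a::real)" and xn: "x n = b"
      and P: "\<forall>i<n. x i \<le> x (Suc i) \<and> x (Suc i) - x i < d \<and> x i \<le> \<xi> i \<and> \<xi> i \<le> x (Suc i)"
    have mono: "\<forall>i<n. x i \<le> x (Suc i)" using P by auto
    have inab: "a \<le> x i" "x i \<le> b" if "i \<le> n" for i
      using chain_mono[OF mono, of 0 i] chain_mono[OF mono, of i n] that x0 xn by auto
    have sub: "{x i..x (Suc i)} \<subseteq> {a..b}" if "i < n" for i
      using inab[of i] inab[of "Suc i"] that by auto
    have piece: "norm (F (\<xi> i) * (g (x (Suc i)) - g (x i)) - integral {x i..x (Suc i)} (\<lambda>t. F t * h t))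
        \<le> e' * integral {x i..x (Suc i)} (\<lambda>t. norm (h t))" if i: "i < n" for i
    proof -
      have hi: "h absolutely_integrable_on {x i..x (Suc i)}"
        by (rule absolutely_integrable_on_subinterval[OF h sub[OF i]])
      have Fhi: "(\<lambda>t. F t * h t) absolutely_integrable_on {x i..x (Suc i)}"
        by (rule absolutely_integrable_on_subinterval[OF Fh sub[OF i]])
      have hii: "h integrable_on {x i..x (Suc i)}" and hni: "(\<lambda>t. norm (h t)) integrable_on {x i..x (Suc i)}"
        using hi absolutely_integrable_on_def by blast+
      have Fhii: "(\<lambda>t. F t * h t) integrable_on {x i..x (Suc i)}"
        using Fhi absolutely_integrable_on_def by blast
      have "F (\<xi> i) * (g (x (Suc i)) - g (x i)) = integral {x i..x (Suc i)} (\<lambda>t. F (\<xi> i) * h t)"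
        using g[of "x i" "x (Suc i)"] inab[of i] inab[of "Suc i"] P i by simp
      then have "F (\<xi> i) * (g (x (Suc i)) - g (x i)) - integral {x i..x (Suc i)} (\<lambda>t. F t * h t)
          = integral {x i..x (Suc i)} (\<lambda>t. (F (\<xi> i) - F t) * h t)"
        using integral_diff[OF integrable_on_mult_right[OF hii, of "F (\<xi> i)"] Fhii]
        by (simp add: algebra_simps)
      also have "norm \<dots> \<le> integral {x i..x (Suc i)} (\<lambda>t. e' * norm (h t))"
      proof (rule integral_norm_bound_integral)
        show "(\<lambda>t. (F (\<xi> i) - F t) * h t) integrable_on {x i..x (Suc i)}"
          using integrable_diff[OF integrable_on_mult_right[OF hii, of "F (\<xi> i)"] Fhii]
          by (simp add: algebra_simps)
        show "(\<lambda>t. e' * norm (h t)) integrable_on {x i..x (Suc i)}"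
          using integrable_on_mult_right[OF hni] by simp
        fix t assume t: "t \<in> {x i..x (Suc i)}"
        have "dist (F (\<xi> i)) (F t) < e'"
          using d(2)[of t "\<xi> i"] t sub[OF i] P i by (auto simp: dist_real_def)
        then have "norm (F (\<xi> i) - F t) \<le> e'" by (simp add: dist_norm)
        then show "norm ((F (\<xi> i) - F t) * h t) \<le> e' * norm (h t)"
          by (simp add: norm_mult mult_right_mono)
      qed
      also have "\<dots> = e' * integral {x i..x (Suc i)} (\<lambda>t. norm (h t))" by simp
      finally show ?thesis .
    qed
    have sumFh: "integral {a..b} (\<lambda>t. F t * h t) = (\<Sum>i<n. integral {x i..x (Suc i)} (\<lambda>t. F t * h t))"
      using integral_chain_sum[OF mono, of "\<lambda>t. F t * h t"] Fh x0 xn absolutely_integrable_on_def by auto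
    have sumA: "A = (\<Sum>i<n. integral {x i..x (Suc i)} (\<lambda>t. norm (h t)))"
      using integral_chain_sum[OF mono, of "\<lambda>t. norm (h t)"] hn x0 xn unfolding A_def by auto
    have "norm ((\<Sum>i<n. F (\<xi> i) * (g (x (Suc i)) - g (x i))) - integral {a..b} (\<lambda>t. F t * h t))
        = norm (\<Sum>i<n. F (\<xi> i) * (g (x (Suc i)) - g (x i)) - integral {x i..x (Suc i)} (\<lambda>t. F t * h t))"
      by (simp add: sumFh sum_subtractf)
    also have "\<dots> \<le> (\<Sum>i<n. norm (F (\<xi> i) * (g (x (Suc i)) - g (x i)) - integral {x i..x (Suc i)} (\<lambda>t. F t * h t)))"
      by (rule norm_sum)
    also have "\<dots> \<le> (\<Sum>i<n. e' * integral {x i..x (Suc i)} (\<lambda>t. norm (h t)))"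
      by (rule sum_mono) (use piece in auto)
    also have "\<dots> = e' * A" by (simp add: sumA sum_distrib_left)
    also have "\<dots> < e" using e A0 by (simp add: e'_def field_simps)
    finally show "norm ((\<Sum>i<n. F (\<xi> i) * (g (x (Suc i)) - g (x i))) - integral {a..b} (\<lambda>t. F t * h t)) < e" .
  qed
qed

lemma RS_unique:
  assumes ab: "a \<le> b" and I1: "has_RS_integral F g a b I1" and I2: "has_RS_integral F g a b I2"
  shows "I1 = I2"
proof (rule ccontr)
  assume ne: "I1 \<noteq> I2"
  define e where "e = norm (I1 - I2) / 2"
  have e: "e > 0" using ne by (simp add: e_def)
  obtain d1 where d1: "d1 > 0" "\<And>n x \<xi>. x 0 = a \<Longrightarrow> x n = b \<Longrightarrow>
        (\<forall>i<n. x i \<le> x (Suc i) \<and> x (Suc i) - x i < d1 \<and> x i \<le> \<xi> i \<and> \<xi> i \<le> x (Suc i)) \<Longrightarrow>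
        norm ((\<Sum>i<n. F (\<xi> i) * (g (x (Suc i)) - g (x i))) - I1) < e"
    using I1 e unfolding has_RS_integral_def by meson
  obtain d2 where d2: "d2 > 0" "\<And>n x \<xi>. x 0 = a \<Longrightarrow> x n = b \<Longrightarrow>
        (\<forall>i<n. x i \<le> x (Suc i) \<and> x (Suc i) - x i < d2 \<and> x i \<le> \<xi> i \<and> \<xi> i \<le> x (Suc i)) \<Longrightarrow>
        norm ((\<Sum>i<n. F (\<xi> i) * (g (x (Suc i)) - g (x i))) - I2) < e"
    using I2 e unfolding has_RS_integral_def by meson
  define d where "d = min d1 d2"
  have d: "d > 0" using d1 d2 by (simp add: d_def)
  obtain n :: nat where n: "(b - a) / d < n" using reals_Archimedean2 by blast
  have n0: "n > 0" using n ab d by (metis divide_nonneg_pos of_nat_0_less_iff diff_ge_0_iff_ge order_le_less_trans)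
  define c where "c = (b - a) / n"
  define x where "x i = a + real i * c" for i :: nat
  have step: "x (Suc i) - x i = c" for i
    by (simp add: x_def algebra_simps)
  have stepd: "c < d" using n d n0 by (simp add: c_def field_simps)
  have c0: "c \<ge> 0" using ab n0 by (simp add: c_def)
  have P: "\<forall>i<n. x i \<le> x (Suc i) \<and> x (Suc i) - x i < d1 \<and> x i \<le> x i \<and> x i \<le> x (Suc i)"
      "\<forall>i<n. x i \<le> x (Suc i) \<and> x (Suc i) - x i < d2 \<and> x i \<le> x i \<and> x i \<le> x (Suc i)"
    using step stepd c0 by (auto simp: d_def) (metis diff_ge_0_iff_ge)+
  have x0: "x 0 = a" and xn: "x n = b" using n0 by (auto simp: x_def c_def)
  define S where "S = (\<Sum>i<n. F (x i) * (g (x (Suc i)) - g (x i)))"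
  have "norm (I1 - I2) = norm ((S - I2) - (S - I1))" by (simp add: algebra_simps)
  also have "\<dots> \<le> norm (S - I2) + norm (S - I1)" by (rule norm_triangle_ineq4)
  also have "\<dots> < e + e" using d1(2)[OF x0 xn P(1)] d2(2)[OF x0 xn P(2)] unfolding S_def by simp
  finally show False by (simp add: e_def)
qed

lemma RS_eq:
  fixes F h g :: "real \<Rightarrow> complex"
  assumes ab: "a \<le> b" and Fc: "continuous_on {a..b} F" and h: "h absolutely_integrable_on {a..b}"
    and g: "\<And>x y. a \<le> x \<Longrightarrow> x \<le> y \<Longrightarrow> y \<le> b \<Longrightarrow> g y - g x = integral {x..y} h"
  shows "RS_integral F g a b = integral {a..b} (\<lambda>t. F t * h t)"
  unfolding RS_integral_def
  using RS_has[OF assms] RS_unique[OF ab] by blast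


lemma lborel_abs_UNIV: "integrable lborel (h :: real \<Rightarrow> complex) \<Longrightarrow> h absolutely_integrable_on UNIV"
  unfolding absolutely_integrable_on_def
  by (intro conjI integrable_on_lborel integrable_norm)

lemma lborel_abs: "integrable lborel (h :: real \<Rightarrow> complex) \<Longrightarrow> h absolutely_integrable_on {a..b}"
  by (rule absolutely_integrable_on_subinterval[OF lborel_abs_UNIV]) auto

lemma Bc_bounded:
  assumes "Bc F" shows "\<exists>M. \<forall>x. norm (F x) \<le> M"
proof -
  from assms obtain L where c: "continuous_on UNIV F" and b: "(F \<longlongrightarrow> 0) at_bot" and t: "(F \<longlongrightarrow> L) at_top"
    unfolding Bc_def by auto
  have "eventually (\<lambda>x. dist (F x) 0 < 1) at_bot" using b by (rule tendstoD) simp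
  then obtain A where A: "\<And>x. x \<le> A \<Longrightarrow> norm (F x) < 1" by (auto simp: eventually_at_bot_linorder)
  have "eventually (\<lambda>x. dist (F x) L < 1) at_top" using t by (rule tendstoD) simp
  then obtain B where B: "\<And>x. x \<ge> B \<Longrightarrow> dist (F x) L < 1" by (auto simp: eventually_at_top_linorder)
  have "bounded (F ` {A..B})"
    by (rule compact_imp_bounded[OF compact_continuous_image[OF continuous_on_subset[OF c] compact_Icc]]) auto
  then obtain C where C: "\<forall>x\<in>{A..B}. norm (F x) \<le> C" by (auto simp: bounded_iff)
  have "norm (F x) \<le> max 1 (max C (norm L + 1))" for x
  proof (cases "x \<le> A")
    case True then show ?thesis using A[of x] by simp
  next
    case False
    show ?thesis
    proof (cases "x \<ge> B")
      case True
      then have "norm (F x) \<le> norm L + 1"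
        using B[of x] norm_triangle_sub[of "F x" L] by (simp add: dist_norm)
      then show ?thesis by simp
    next
      case False2: False
      have "norm (F x) \<le> C" using C False False2 by auto
      then show ?thesis by simp
    qed
  qed
  then have "\<forall>x. norm (F x) \<le> max 1 (max C (norm L + 1))" by simp
  then show ?thesis by (rule exI)
qed

lemma Bc_integrable_mult:
  assumes "Bc F" "integrable lborel (h :: real \<Rightarrow> complex)"
  shows "integrable lborel (\<lambda>t. F t * h t)"
proof -
  obtain M where M: "\<And>x. norm (F x) \<le> M" using Bc_bounded[OF assms(1)] by blast
  have M0: "M \<ge> 0" using M[of 0] by (meson norm_ge_zero order_trans)
  have Fm: "F \<in> borel_measurable borel"
    using assms(1) unfolding Bc_def by (blast intro: borel_measurable_continuous_onI)
  have hm: "h \<in> borel_measurable lborel" using assms(2) by (rule borel_measurable_integrable)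
  show ?thesis
  proof (rule Bochner_Integration.integrable_bound[of lborel "\<lambda>t. M * norm (h t)" "\<lambda>t. F t * h t"])
    show "integrable lborel (\<lambda>t. M * norm (h t))" using assms(2) by (intro integrable_mult_right integrable_norm)
    show "(\<lambda>t. F t * h t) \<in> borel_measurable lborel" using Fm hm by measurable
    show "AE x in lborel. norm (F x * h x) \<le> norm (M * norm (h x))"
      using M M0 by (auto simp: norm_mult intro!: mult_right_mono)
  qed
qed

lemma Ac_eq:
  fixes F g h :: "real \<Rightarrow> complex"
  assumes F: "Bc F" and g: "\<And>x y. x \<le> y \<Longrightarrow> g y - g x = integral {x..y} h"
    and h: "integrable lborel h" and gL: "(g \<longlongrightarrow> L) at_top"
  shows "Ac_integral F g = at_infty F * L - integral UNIV (\<lambda>t. F t * h t)"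
proof -
  have ag: "at_infty g = L" unfolding at_infty_def by (rule tendsto_Lim[OF _ gL]) simp
  have Fc: "continuous_on UNIV F" using F unfolding Bc_def by auto
  have Fh: "integrable lborel (\<lambda>t. F t * h t)" by (rule Bc_integrable_mult[OF F h])
  have L: "((\<lambda>(a,b). integral {a..b} (\<lambda>t. F t * h t)) \<longlongrightarrow> integral UNIV (\<lambda>t. F t * h t)) (at_bot \<times>\<^sub>F at_top)"
    by (rule interval_integral_tendsto[OF integrable_on_lborel[OF Fh]])
  have ev: "eventually (\<lambda>x. (\<lambda>(a,b). integral {a..b} (\<lambda>t. F t * h t)) x = (\<lambda>(a,b). RS_integral F g a b) x) (at_bot \<times>\<^sub>F at_top)"
    using ev_le_prod[of 0]
  proof (rule eventually_mono)
    fix x :: "real \<times> real" assume "case x of (a, b) \<Rightarrow> a < - 0 \<and> 0 < b"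
    then obtain a b where x: "x = (a,b)" "a < 0" "0 < b" by auto
    have "RS_integral F g a b = integral {a..b} (\<lambda>t. F t * h t)"
      by (rule RS_eq) (use x Fc g lborel_abs[OF h] in \<open>auto intro: continuous_on_subset\<close>)
    then show "(\<lambda>(a,b). integral {a..b} (\<lambda>t. F t * h t)) x = (\<lambda>(a,b). RS_integral F g a b) x" using x by simp
  qed
  have "((\<lambda>(a,b). RS_integral F g a b) \<longlongrightarrow> integral UNIV (\<lambda>t. F t * h t)) (at_bot \<times>\<^sub>F at_top)"
    using tendsto_cong[OF ev] L by simp
  then have "stieltjes_integral F g = integral UNIV (\<lambda>t. F t * h t)"
    unfolding stieltjes_integral_def by (rule tendsto_Lim[OF prod_bot_top_nontriv])
  then show ?thesis unfolding Ac_integral_def ag by simp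
qed


definition Kf :: "real \<Rightarrow> complex" where
  "Kf u = (if u = 0 then - \<i> / 6 else
     (- \<i> + \<i> * exp (- \<i> * complex_of_real u)) / complex_of_real (u^2)
     - 2 * (1 - \<i> * complex_of_real u - exp (- \<i> * complex_of_real u)) / complex_of_real (u^3))"

lemma v1_Re: "u \<noteq> 0 \<Longrightarrow> Re (v 1 u) = (1 - cos u) / u^2"
  by (simp add: v_def Re_exp Im_exp)
lemma v1_Im: "u \<noteq> 0 \<Longrightarrow> Im (v 1 u) = (sin u - u) / u^2"
  by (simp add: v_def Re_exp Im_exp)
lemma Kf_Re: "u \<noteq> 0 \<Longrightarrow> Re (Kf u) = sin u / u^2 - 2 * (1 - cos u) / u^3"
  by (simp add: Kf_def Re_exp Im_exp)
lemma Kf_Im: "u \<noteq> 0 \<Longrightarrow> Im (Kf u) = (cos u - 1) / u^2 - 2 * (sin u - u) / u^3"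
  by (simp add: Kf_def Re_exp Im_exp)



lemma isCont_v1_0: "isCont (v 1) 0"
  unfolding isCont_def
proof (subst tendsto_complex_iff, intro conjI)
  have "((\<lambda>u. (1 - cos u)/u^2) \<longlongrightarrow> 1/2) (at (0::real))" by real_asymp
  moreover have "eventually (\<lambda>u. (1 - cos u)/u^2 = Re (v 1 u)) (at (0::real))"
    by (simp add: eventually_at_filter v1_Re)
  ultimately show "((\<lambda>u. Re (v 1 u)) \<longlongrightarrow> Re (v 1 0)) (at 0)"
    using tendsto_cong by (force simp: v_def)
next
  have "((\<lambda>u. (sin u - u)/u^2) \<longlongrightarrow> 0) (at (0::real))" by real_asymp
  moreover have "eventually (\<lambda>u. (sin u - u)/u^2 = Im (v 1 u)) (at (0::real))"
    by (simp add: eventually_at_filter v1_Im)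
  ultimately show "((\<lambda>u. Im (v 1 u)) \<longlongrightarrow> Im (v 1 0)) (at 0)"
    using tendsto_cong by (force simp: v_def)
qed

lemma isCont_Kf_0: "isCont Kf 0"
  unfolding isCont_def
proof (subst tendsto_complex_iff, intro conjI)
  have "((\<lambda>u. sin u / u^2 - 2 * (1 - cos u) / u^3) \<longlongrightarrow> 0) (at (0::real))" by real_asymp
  moreover have "eventually (\<lambda>u. sin u / u^2 - 2 * (1 - cos u) / u^3 = Re (Kf u)) (at (0::real))"
    by (simp add: eventually_at_filter Kf_Re)
  ultimately show "((\<lambda>u. Re (Kf u)) \<longlongrightarrow> Re (Kf 0)) (at 0)"
    using tendsto_cong by (force simp: Kf_def)
next
  have "((\<lambda>u. (cos u - 1) / u^2 - 2 * (sin u - u) / u^3) \<longlongrightarrow> -1/6) (at (0::real))" by real_asymp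
  moreover have "eventually (\<lambda>u. (cos u - 1) / u^2 - 2 * (sin u - u) / u^3 = Im (Kf u)) (at (0::real))"
    by (simp add: eventually_at_filter Kf_Im)
  ultimately show "((\<lambda>u. Im (Kf u)) \<longlongrightarrow> Im (Kf 0)) (at 0)"
    using tendsto_cong by (force simp: Kf_def)
qed

definition fW :: "complex \<Rightarrow> complex" where "fW z = (1 - \<i> * z - exp (- \<i> * z)) / z^2"
definition fK :: "complex \<Rightarrow> complex" where
  "fK z = (- \<i> + \<i> * exp (- \<i> * z)) / z^2 - 2 * (1 - \<i> * z - exp (- \<i> * z)) / z^3"

lemma fW_deriv: "z \<noteq> 0 \<Longrightarrow> (fW has_field_derivative fK z) (at z)"
  unfolding fW_def fK_def
  by (rule derivative_eq_intros refl | simp)+ (simp add: field_simps power2_eq_square power3_eq_cube, algebra)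

lemma v1_fW: "u \<noteq> 0 \<Longrightarrow> v 1 u = fW (complex_of_real u)"
  by (simp add: v_def fW_def)
lemma Kf_fK: "u \<noteq> 0 \<Longrightarrow> Kf u = fK (complex_of_real u)"
  by (simp add: Kf_def fK_def)

lemma v1_deriv: "u \<noteq> 0 \<Longrightarrow> (v 1 has_vector_derivative Kf u) (at u)"
proof -
  assume u: "u \<noteq> 0"
  have "((\<lambda>x. fW (complex_of_real x)) has_vector_derivative fK (complex_of_real u)) (at u)"
    using has_vector_derivative_real_field[OF fW_deriv, of u UNIV] u by simp
  then have "((\<lambda>x. fW (complex_of_real x)) has_vector_derivative Kf u) (at u)" using Kf_fK u by simp
  then show ?thesis
    by (rule has_vector_derivative_transform_within_open[where S="-{0}"]) (use u in \<open>auto simp: v1_fW\<close>)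
qed

lemma isCont_v1: "isCont (v 1) u"
  by (cases "u = 0") (use isCont_v1_0 v1_deriv in \<open>auto intro: has_vector_derivative_continuous\<close>)

lemma isCont_Kf: "isCont Kf u"
proof (cases "u = 0")
  case True then show ?thesis using isCont_Kf_0 by simp
next
  case False
  have ev: "eventually (\<lambda>x. x \<noteq> 0) (nhds u)" using False by (rule t1_space_nhds)
  have c: "isCont (\<lambda>x. fK (complex_of_real x)) u"
    unfolding fK_def using False by (intro continuous_intros) auto
  have eq: "eventually (\<lambda>x. Kf x = fK (complex_of_real x)) (nhds u)"
    using ev by eventually_elim (simp add: Kf_fK)
  show ?thesis using isCont_cong[OF eq] c by simp
qed


lemma norm_e: "norm (exp (- \<i> * complex_of_real u)) = 1"
  by (simp add: norm_exp_eq_Re)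

lemma normB: "norm (1 - \<i> * complex_of_real u - exp (- \<i> * complex_of_real u)) \<le> 2 + \<bar>u\<bar>"
proof -
  have "norm (1 - \<i> * complex_of_real u - exp (- \<i> * complex_of_real u))
      \<le> norm (1 - \<i> * complex_of_real u) + norm (exp (- \<i> * complex_of_real u))" by (rule norm_triangle_ineq4)
  also have "norm (1 - \<i> * complex_of_real u) \<le> norm (1::complex) + norm (\<i> * complex_of_real u)" by (rule norm_triangle_ineq4)
  finally show ?thesis by (simp add: norm_e norm_mult)
qed

lemma Kf_bound_far:
  assumes u: "1 \<le> \<bar>u\<bar>" shows "norm (Kf u) \<le> 8 / u^2"
proof -
  have u0: "u \<noteq> 0" using u by auto
  define e where "e = exp (- \<i> * complex_of_real u)"
  have ne: "norm e = 1" by (simp add: e_def norm_e)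
  have A: "norm (- \<i> + \<i> * e) \<le> 2"
    using norm_triangle_ineq[of "-\<i>" "\<i> * e"] ne by (simp add: norm_mult)
  have B: "norm (1 - \<i> * complex_of_real u - e) \<le> 2 + \<bar>u\<bar>" using normB[of u] by (simp add: e_def)
  have "Kf u = (- \<i> + \<i> * e) / complex_of_real (u^2) - 2 * (1 - \<i> * complex_of_real u - e) / complex_of_real (u^3)"
    using u0 by (simp add: Kf_def e_def)
  then have "norm (Kf u) \<le> norm ((- \<i> + \<i> * e) / complex_of_real (u^2)) + norm (2 * (1 - \<i> * complex_of_real u - e) / complex_of_real (u^3))"
    using norm_triangle_ineq4 by metis
  also have "\<dots> = norm (- \<i> + \<i> * e) / u^2 + 2 * norm (1 - \<i> * complex_of_real u - e) / \<bar>u\<bar>^3"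
    by (simp only: norm_divide norm_mult norm_of_real abs_power2 power_abs norm_numeral) simp
  also have "\<dots> \<le> 2 / u^2 + 2 * (2 + \<bar>u\<bar>) / \<bar>u\<bar>^3"
    by (intro add_mono divide_right_mono mult_left_mono A B) auto
  also have "2 * (2 + \<bar>u\<bar>) / \<bar>u\<bar>^3 \<le> 6 * \<bar>u\<bar> / \<bar>u\<bar>^3"
    by (rule divide_right_mono) (use u in auto)
  also have "6 * \<bar>u\<bar> / \<bar>u\<bar>^3 = 6 / u^2"
    using u0 by (simp add: power2_eq_square power3_eq_cube abs_mult_self_eq field_simps)
  finally show ?thesis by simp
qed

lemma v1_bound_far:
  assumes u: "u \<noteq> 0" shows "norm (v 1 u) \<le> (2 + \<bar>u\<bar>) / u^2"
proof -
  have "norm (v 1 u) = norm (1 - \<i> * complex_of_real u - exp (- \<i> * complex_of_real u)) / u^2"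
    using u by (simp only: v_def if_False mult_1 norm_divide norm_of_real abs_power2)
  also have "\<dots> \<le> (2 + \<bar>u\<bar>) / u^2" by (rule divide_right_mono[OF normB]) simp
  finally show ?thesis .
qed

lemma cont_bounded_far:
  fixes f :: "real \<Rightarrow> complex"
  assumes c: "\<And>u. isCont f u" and far: "\<And>u. 1 \<le> \<bar>u\<bar> \<Longrightarrow> norm (f u) \<le> B"
  shows "\<exists>M. \<forall>u. norm (f u) \<le> M"
proof -
  have "bounded (f ` {-1..1})"
    by (rule compact_imp_bounded[OF compact_continuous_image[OF continuous_at_imp_continuous_on compact_Icc]]) (use c in auto)
  then obtain C where C: "\<forall>x\<in>{-1..1}. norm (f x) \<le> C" by (auto simp: bounded_iff)
  have "norm (f u) \<le> max B C" for u
  proof (cases "1 \<le> \<bar>u\<bar>")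
    case True then show ?thesis using far[of u] by simp
  next
    case False
    then have "u \<in> {-1..1}" by auto
    then show ?thesis using C by (simp add: le_max_iff_disj)
  qed
  then show ?thesis by (intro exI[of _ "max B C"]) simp
qed

lemma Kf_bounded: "\<exists>M. \<forall>u. norm (Kf u) \<le> M"
proof (rule cont_bounded_far[OF isCont_Kf])
  fix u :: real assume u: "1 \<le> \<bar>u\<bar>"
  have "8 / u^2 \<le> 8"
    using u by (simp add: field_simps) (metis abs_ge_self abs_le_square_iff le_square linorder_not_less mult.commute mult_left_le order_trans power2_eq_square one_le_power abs_square_le_1 power2_abs)
  then show "norm (Kf u) \<le> 8" using Kf_bound_far[OF u] by simp
qed

lemma v1_bounded: "\<exists>M. \<forall>u. norm (v 1 u) \<le> M"
proof (rule cont_bounded_far[OF isCont_v1])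
  fix u :: real assume u: "1 \<le> \<bar>u\<bar>"
  have "\<bar>u\<bar> * 1 \<le> \<bar>u\<bar> * \<bar>u\<bar>" using u by (intro mult_left_mono) auto
  then have "\<bar>u\<bar> \<le> u^2" by (simp add: power2_eq_square abs_mult_self_eq)
  then have "2 + \<bar>u\<bar> \<le> 3 * u^2" using u by linarith
  moreover have "u^2 > 0" using u by auto
  ultimately have "(2 + \<bar>u\<bar>) / u^2 \<le> 3" by (simp add: divide_le_eq)
  then show "norm (v 1 u) \<le> 3" using v1_bound_far[of u] u by fastforce
qed


definition kk :: "real \<Rightarrow> real \<Rightarrow> complex" where "kk s t = complex_of_real (s^3) * Kf (s*t)"

lemma v_scale: "v s t = complex_of_real (s^2) * v 1 (s*t)"
proof (cases "t = 0")
  case True then show ?thesis by (simp add: v_def)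
next
  case False
  show ?thesis
  proof (cases "s = 0")
    case True then show ?thesis using False by (simp add: v_def)
  next
    case False2: False
    then show ?thesis using False by (simp add: v_def field_simps power2_eq_square)
  qed
qed

lemma v_deriv: "s * t \<noteq> 0 \<Longrightarrow> ((\<lambda>t. v s t) has_vector_derivative kk s t) (at t)"
proof -
  assume st: "s * t \<noteq> 0"
  have d1: "((\<lambda>t. s*t) has_vector_derivative s) (at t)"
    unfolding has_real_derivative_iff_has_vector_derivative[symmetric]
    by (rule derivative_eq_intros refl | simp)+
  have "((v 1 \<circ> (\<lambda>t. s*t)) has_vector_derivative (s *\<^sub>R Kf (s*t))) (at t)"
    by (rule vector_diff_chain_at[OF d1]) (use v1_deriv st in simp)
  then have "((\<lambda>t. complex_of_real (s^2) * (v 1 \<circ> (\<lambda>t. s*t)) t) has_vector_derivative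
      (complex_of_real (s^2) * (s *\<^sub>R Kf (s*t)))) (at t)"
    by (rule has_vector_derivative_mult_right)
  moreover have "complex_of_real (s^2) * (s *\<^sub>R Kf (s*t)) = kk s t"
    by (simp add: kk_def scaleR_conv_of_real power2_eq_square power3_eq_cube)
  moreover have "(\<lambda>t. complex_of_real (s^2) * (v 1 \<circ> (\<lambda>t. s*t)) t) = (\<lambda>t. v s t)"
    by (simp add: v_scale[of s] fun_eq_iff)
  ultimately show ?thesis by simp
qed

lemma isCont_vs: "isCont (\<lambda>t. v s t) t"
proof -
  have "isCont (\<lambda>t. complex_of_real (s^2) * v 1 (s*t)) t"
    by (intro continuous_intros isCont_o2[where g="v 1", OF _ isCont_v1])
  then show ?thesis by (simp add: v_scale[of s])
qed

lemma v_FTC: "x \<le> y \<Longrightarrow> v s y - v s x = integral {x..y} (kk s)"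
proof (cases "s = 0")
  case True
  have k0: "kk 0 = (\<lambda>t. 0)" by (rule ext) (simp add: kk_def)
  then show ?thesis using True by (simp add: v_scale[of 0])
next
  case False
  assume xy: "x \<le> y"
  have "(kk s has_integral v s y - v s x) {x..y}"
  proof (rule fundamental_theorem_of_calculus_interior_strong[of "{0}"])
    show "continuous_on {x..y} (v s)"
      by (rule continuous_at_imp_continuous_on) (use isCont_vs in auto)
    fix t assume "t \<in> {x<..<y} - {0}"
    then have "s * t \<noteq> 0" using False by auto
    from v_deriv[OF this] show "(v s has_vector_derivative kk s t) (at t)" by simp
  qed (use xy in auto)
  then show ?thesis by (simp add: integral_unique)
qed

lemma isCont_kk: "isCont (\<lambda>p. kk (fst p) (snd p)) p"
  unfolding kk_def
  by (intro continuous_intros isCont_o2[where g=Kf, OF _ isCont_Kf])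


lemma abs3: "\<bar>s::real\<bar>^3 = \<bar>s\<bar> * s^2"
  by (simp add: power3_eq_cube power2_eq_square abs_mult_self_eq mult.assoc)

lemma kk_bound: "\<exists>C. \<forall>s t. norm (kk s t) \<le> C * (\<bar>s\<bar> + \<bar>s\<bar>^3) / (1 + t^2)"
proof -
  obtain M where M: "\<And>u. norm (Kf u) \<le> M" using Kf_bounded by blast
  have M0: "0 \<le> M" using M[of 0] by (meson norm_ge_zero order_trans)
  define C where "C = 2*M + 16"
  have main: "norm (kk s t) * (1 + t^2) \<le> C * (\<bar>s\<bar> + \<bar>s\<bar>^3)" for s t
  proof -
    have nk: "norm (kk s t) = \<bar>s\<bar>^3 * norm (Kf (s*t))" by (simp only: kk_def norm_mult norm_of_real power_abs)
    have nn: "0 \<le> M * \<bar>s\<bar>" "0 \<le> M * \<bar>s\<bar>^3" "0 \<le> \<bar>s\<bar>^3" using M0 by auto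
    have target: "2 * M * \<bar>s\<bar> \<le> C * (\<bar>s\<bar> + \<bar>s\<bar>^3)" "2 * M * \<bar>s\<bar>^3 \<le> C * (\<bar>s\<bar> + \<bar>s\<bar>^3)"
        "16 * \<bar>s\<bar> \<le> C * (\<bar>s\<bar> + \<bar>s\<bar>^3)"
      using nn by (simp_all add: C_def algebra_simps)
    consider "\<bar>t\<bar> \<le> 1" | "1 < \<bar>t\<bar>" "1 \<le> \<bar>s*t\<bar>" | "1 < \<bar>t\<bar>" "\<bar>s*t\<bar> < 1" by linarith
    then show ?thesis
    proof cases
      case 1
      have t2: "1 + t^2 \<le> 2" using 1 abs_square_le_1[of t] by simp
      have "norm (kk s t) \<le> \<bar>s\<bar>^3 * M" unfolding nk by (intro mult_left_mono M) auto
      then have "norm (kk s t) * (1 + t^2) \<le> (\<bar>s\<bar>^3 * M) * 2"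
        using t2 M0 by (intro mult_mono) auto
      then show ?thesis using target(2) by (simp add: algebra_simps)
    next
      case 2
      have s0: "s \<noteq> 0" and t0: "t \<noteq> 0" using 2 by auto
      have t2: "1 + t^2 \<le> 2 * t^2" using 2 abs_square_less_1[of t] by simp
      have "norm (kk s t) \<le> \<bar>s\<bar>^3 * (8 / (s*t)^2)" unfolding nk
        by (intro mult_left_mono Kf_bound_far) (use 2 in auto)
      then have "norm (kk s t) * (1 + t^2) \<le> (\<bar>s\<bar>^3 * (8 / (s*t)^2)) * (2 * t^2)"
        using t2 by (intro mult_mono) auto
      also have "\<dots> = 16 * \<bar>s\<bar>" using s0 t0 by (simp add: abs3 field_simps power2_eq_square)
      finally show ?thesis using target(3) by simp
    next
      case 3
      have t0: "t \<noteq> 0" using 3 by auto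
      have t2: "1 + t^2 \<le> 2 * t^2" using 3 abs_square_less_1[of t] by simp
      have st2: "(s*t)^2 \<le> 1" using 3 abs_square_le_1[of "s*t"] by simp
      have "norm (kk s t) \<le> \<bar>s\<bar>^3 * M" unfolding nk by (intro mult_left_mono M) auto
      then have "norm (kk s t) * (1 + t^2) \<le> (\<bar>s\<bar>^3 * M) * (2 * t^2)"
        using t2 M0 by (intro mult_mono) auto
      also have "\<dots> = (2 * M * \<bar>s\<bar>) * (s*t)^2" by (simp add: abs3 power_mult_distrib)
      also have "\<dots> \<le> (2 * M * \<bar>s\<bar>) * 1" using st2 M0 by (intro mult_left_mono) auto
      finally show ?thesis using target(1) by simp
    qed
  qed
  have "norm (kk s t) \<le> C * (\<bar>s\<bar> + \<bar>s\<bar>^3) / (1 + t^2)" for s t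
    using main[of s t] by (simp add: le_divide_eq add_pos_nonneg)
  then show ?thesis by blast
qed


lemma integrable_inv1p: "integrable lborel (\<lambda>t::real. inverse (1 + t^2))"
  using integrable_inverse_1_plus_square by (simp add: set_integrable_def)

lemma integrable_decay:
  fixes g :: "real \<Rightarrow> 'a::{banach, second_countable_topology}"
  assumes m: "g \<in> borel_measurable lborel" and b: "\<And>t. norm (g t) \<le> B / (1 + t^2)"
  shows "integrable lborel g"
proof -
  have "norm (g 0) \<le> B" using b[of 0] by simp
  then have B0: "B \<ge> 0" by (meson norm_ge_zero order_trans)
  show ?thesis
  proof (rule Bochner_Integration.integrable_bound[of lborel "\<lambda>t. B * inverse (1 + t^2)" g])
    show "integrable lborel (\<lambda>t. B * inverse (1 + t^2))"
      by (intro integrable_mult_right integrable_inv1p)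
    show "g \<in> borel_measurable lborel" by (rule m)
    show "AE x in lborel. norm (g x) \<le> norm (B * inverse (1 + x^2))"
      using b B0 by (auto simp: divide_inverse abs_mult add_pos_nonneg)
  qed
qed

lemma schwartz_deriv:
  assumes "schwartz \<phi>" shows "(nderiv n \<phi> has_vector_derivative nderiv (Suc n) \<phi> t) (at t)"
  using assms unfolding schwartz_def by (simp add: vector_derivative_works[symmetric])

lemma schwartz_cont: "schwartz \<phi> \<Longrightarrow> isCont (nderiv n \<phi>) t"
  using schwartz_deriv has_vector_derivative_continuous by blast

lemma schwartz_cont_on: "schwartz \<phi> \<Longrightarrow> continuous_on UNIV (nderiv n \<phi>)"
  by (rule continuous_at_imp_continuous_on) (use schwartz_cont in blast)

lemma schwartz_meas: "schwartz \<phi> \<Longrightarrow> nderiv n \<phi> \<in> borel_measurable borel"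
  by (rule borel_measurable_continuous_onI[OF schwartz_cont_on])

lemma schwartz_bound:
  assumes "schwartz \<phi>" shows "\<exists>A. \<forall>t. \<bar>t\<bar>^m * norm (nderiv n \<phi> t) \<le> A"
proof -
  have "bounded (range (\<lambda>t. complex_of_real t ^ m * nderiv n \<phi> t))"
    using assms unfolding schwartz_def by blast
  then obtain A where "\<forall>x\<in>range (\<lambda>t. complex_of_real t ^ m * nderiv n \<phi> t). norm x \<le> A"
    by (auto simp: bounded_iff)
  then have "\<forall>t. \<bar>t\<bar>^m * norm (nderiv n \<phi> t) \<le> A" by (simp add: norm_mult norm_power)
  then show ?thesis by blast
qed

lemma schwartz_decay_bound:
  assumes "schwartz \<phi>" shows "\<exists>B. \<forall>t. \<bar>t\<bar>^m * norm (nderiv n \<phi> t) \<le> B / (1 + t^2)"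
proof -
  obtain A1 where A1: "\<And>t. \<bar>t\<bar>^m * norm (nderiv n \<phi> t) \<le> A1" using schwartz_bound[OF assms] by blast
  obtain A2 where A2: "\<And>t. \<bar>t\<bar>^(m+2) * norm (nderiv n \<phi> t) \<le> A2" using schwartz_bound[OF assms] by blast
  have "\<bar>t\<bar>^m * norm (nderiv n \<phi> t) \<le> (A1 + A2) / (1 + t^2)" for t
  proof -
    have "(\<bar>t\<bar>^m * norm (nderiv n \<phi> t)) * (1 + t^2) = \<bar>t\<bar>^m * norm (nderiv n \<phi> t) + \<bar>t\<bar>^(m+2) * norm (nderiv n \<phi> t)"
      by (simp add: algebra_simps power_add power2_eq_square)
    also have "\<dots> \<le> A1 + A2" using A1[of t] A2[of t] by simp
    finally show ?thesis by (simp add: le_divide_eq add_pos_nonneg)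
  qed
  then show ?thesis by blast
qed

lemma schwartz_integrable:
  assumes "schwartz \<phi>" shows "integrable lborel (\<lambda>t. \<bar>t\<bar>^m * norm (nderiv n \<phi> t))"
proof -
  obtain B where B: "\<And>t. \<bar>t\<bar>^m * norm (nderiv n \<phi> t) \<le> B / (1 + t^2)"
    using schwartz_decay_bound[OF assms] by blast
  show ?thesis
  proof (rule integrable_decay)
    show "(\<lambda>t. \<bar>t\<bar>^m * norm (nderiv n \<phi> t)) \<in> borel_measurable lborel"
      using schwartz_meas[OF assms, of n] by measurable
    show "norm (\<bar>t\<bar>^m * norm (nderiv n \<phi> t)) \<le> B / (1 + t^2)" for t using B[of t] by simp
  qed
qed

lemma schwartz_integrable_c:
  assumes "schwartz \<phi>" and m: "g \<in> borel_measurable lborel" and b: "\<And>t. norm (g t :: complex) \<le> c * (\<bar>t\<bar>^m * norm (nderiv n \<phi> t))"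
  shows "integrable lborel g"
  by (rule Bochner_Integration.integrable_bound[OF integrable_mult_right[OF schwartz_integrable[OF assms(1)], of c] m])
     (use b in \<open>auto intro: order_trans[OF _ abs_ge_self]\<close>)

lemma schwartz_tendsto:
  assumes "schwartz \<phi>"
  shows "((\<lambda>t. \<bar>t\<bar>^m * norm (nderiv n \<phi> t)) \<longlongrightarrow> 0) at_top"
    and "((\<lambda>t. \<bar>t\<bar>^m * norm (nderiv n \<phi> t)) \<longlongrightarrow> 0) at_bot"
proof -
  obtain A where A: "\<And>t. \<bar>t\<bar>^(m+1) * norm (nderiv n \<phi> t) \<le> A" using schwartz_bound[OF assms] by blast
  have le: "norm (\<bar>t\<bar>^m * norm (nderiv n \<phi> t)) \<le> A / \<bar>t\<bar>" if "t \<noteq> 0" for t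
  proof -
    have "(\<bar>t\<bar>^m * norm (nderiv n \<phi> t)) * \<bar>t\<bar> \<le> A" using A[of t] by (simp add: algebra_simps)
    then show ?thesis using that by (simp add: le_divide_eq)
  qed
  have e1: "eventually (\<lambda>t. norm (\<bar>t\<bar>^m * norm (nderiv n \<phi> t)) \<le> A / \<bar>t\<bar>) at_top"
    using eventually_at_top_not_equal[of 0] by eventually_elim (rule le)
  have e2: "eventually (\<lambda>t. norm (\<bar>t\<bar>^m * norm (nderiv n \<phi> t)) \<le> A / \<bar>t\<bar>) at_bot"
    using eventually_at_bot_not_equal[of 0] by eventually_elim (rule le)
  have l1: "((\<lambda>t::real. A / \<bar>t\<bar>) \<longlongrightarrow> 0) at_top" by real_asymp
  have l2: "((\<lambda>t::real. A / \<bar>t\<bar>) \<longlongrightarrow> 0) at_bot" by real_asymp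
  show "((\<lambda>t. \<bar>t\<bar>^m * norm (nderiv n \<phi> t)) \<longlongrightarrow> 0) at_top" by (rule Lim_null_comparison[OF e1 l1])
  show "((\<lambda>t. \<bar>t\<bar>^m * norm (nderiv n \<phi> t)) \<longlongrightarrow> 0) at_bot" by (rule Lim_null_comparison[OF e2 l2])
qed


lemma prod_integrable:
  fixes a b :: "real \<Rightarrow> real"
  assumes a: "integrable lborel a" and b: "integrable lborel b"
  shows "integrable (lborel \<Otimes>\<^sub>M lborel) (\<lambda>(s,t). a s * b t)"
proof (rule lborel_pair.Fubini_integrable)
  have [measurable]: "a \<in> borel_measurable lborel" "b \<in> borel_measurable lborel"
    using a b by auto
  show "(\<lambda>(s,t). a s * b t) \<in> borel_measurable (lborel \<Otimes>\<^sub>M lborel)" by measurable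
  have "(\<lambda>x. LINT y|lborel. norm (case (x, y) of (s, t) \<Rightarrow> a s * b t)) = (\<lambda>x. \<bar>a x\<bar> * (LINT y|lborel. \<bar>b y\<bar>))"
    by (simp add: abs_mult)
  moreover have "integrable lborel (\<lambda>x. \<bar>a x\<bar> * (LINT y|lborel. \<bar>b y\<bar>))"
    using a by (intro integrable_mult_left integrable_abs)
  ultimately show "integrable lborel (\<lambda>x. LINT y|lborel. norm (case (x, y) of (s, t) \<Rightarrow> a s * b t))" by simp
  show "AE x in lborel. integrable lborel (\<lambda>y. case (x, y) of (s, t) \<Rightarrow> a s * b t)"
    using b by (simp add: integrable_mult_right)
qed

lemma bound_prod_integrable:
  fixes f :: "real \<Rightarrow> real \<Rightarrow> complex" and a b :: "real \<Rightarrow> real"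
  assumes m: "(\<lambda>(s,t). f s t) \<in> borel_measurable (lborel \<Otimes>\<^sub>M lborel)"
    and bd: "\<And>s t. norm (f s t) \<le> a s * b t"
    and a: "integrable lborel a" and b: "integrable lborel b"
  shows "integrable (lborel \<Otimes>\<^sub>M lborel) (\<lambda>(s,t). f s t)"
proof (rule Bochner_Integration.integrable_bound[OF prod_integrable[OF a b] m])
  show "AE x in lborel \<Otimes>\<^sub>M lborel. norm (case x of (s, t) \<Rightarrow> f s t) \<le> norm (case x of (s, t) \<Rightarrow> a s * b t)"
    using bd by (auto split: prod.splits intro: order_trans[OF _ abs_ge_self])
qed

lemma fubini_HK:
  fixes f :: "real \<Rightarrow> real \<Rightarrow> complex"
  assumes P: "integrable (lborel \<Otimes>\<^sub>M lborel) (\<lambda>(s,t). f s t)"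
    and I1: "\<And>s. integrable lborel (\<lambda>t. f s t)" and I2: "\<And>t. integrable lborel (\<lambda>s. f s t)"
  shows "integral UNIV (\<lambda>s. integral UNIV (\<lambda>t. f s t)) = integral UNIV (\<lambda>t. integral UNIV (\<lambda>s. f s t))"
    and "integrable lborel (\<lambda>s. integral UNIV (\<lambda>t. f s t))"
    and "integrable lborel (\<lambda>t. integral UNIV (\<lambda>s. f s t))"
proof -
  have e1: "(\<lambda>s. integral UNIV (\<lambda>t. f s t)) = (\<lambda>s. LINT t|lborel. f s t)"
    using I1 by (simp add: integral_lborel)
  have e2: "(\<lambda>t. integral UNIV (\<lambda>s. f s t)) = (\<lambda>t. LINT s|lborel. f s t)"
    using I2 by (simp add: integral_lborel)
  have i1: "integrable lborel (\<lambda>s. LINT t|lborel. f s t)" by (rule lborel_pair.integrable_fst[OF P])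
  have i2: "integrable lborel (\<lambda>t. LINT s|lborel. f s t)" by (rule lborel_pair.integrable_snd[OF P])
  show "integrable lborel (\<lambda>s. integral UNIV (\<lambda>t. f s t))" using i1 e1 by simp
  show "integrable lborel (\<lambda>t. integral UNIV (\<lambda>s. f s t))" using i2 e2 by simp
  have "integral UNIV (\<lambda>s. integral UNIV (\<lambda>t. f s t)) = (LINT s|lborel. LINT t|lborel. f s t)"
    unfolding e1 by (rule integral_lborel[OF i1])
  also have "\<dots> = integral\<^sup>L (lborel \<Otimes>\<^sub>M lborel) (\<lambda>(s,t). f s t)" by (rule lborel_pair.integral_fst[OF P])
  also have "\<dots> = (LINT t|lborel. LINT s|lborel. f s t)" by (rule lborel_pair.integral_snd[OF P, symmetric])
  also have "\<dots> = integral UNIV (\<lambda>t. integral UNIV (\<lambda>s. f s t))"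
    unfolding e2 by (rule integral_lborel[OF i2, symmetric])
  finally show "integral UNIV (\<lambda>s. integral UNIV (\<lambda>t. f s t)) = integral UNIV (\<lambda>t. integral UNIV (\<lambda>s. f s t))" .
qed


lemma kk_meas: "(\<lambda>(s,t). kk s t) \<in> borel_measurable (lborel \<Otimes>\<^sub>M lborel)"
proof -
  have "continuous_on UNIV (\<lambda>p. kk (fst p) (snd p))"
    by (rule continuous_at_imp_continuous_on) (use isCont_kk in blast)
  then have "(\<lambda>p. kk (fst p) (snd p)) \<in> borel_measurable borel" by (rule borel_measurable_continuous_onI)
  then show ?thesis by (simp add: lborel_prod case_prod_beta')
qed

lemma kk_bound_C: "\<exists>C\<ge>0. \<forall>s t. norm (kk s t) \<le> C * (\<bar>s\<bar> + \<bar>s\<bar>^3) / (1 + t^2)"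
proof -
  obtain C where C: "\<And>s t. norm (kk s t) \<le> C * (\<bar>s\<bar> + \<bar>s\<bar>^3) / (1 + t^2)" using kk_bound by blast
  have "norm (kk 1 0) \<le> C * 2" using C[of 1 0] by simp
  then have "0 \<le> C * 2" by (meson norm_ge_zero order_trans)
  then show ?thesis using C by (intro exI[of _ C]) auto
qed

lemma P_facts:
  fixes G :: "real \<Rightarrow> complex"
  assumes \<phi>: "schwartz \<phi>" and Gm: "G \<in> borel_measurable lborel" and Gb: "\<And>t. norm (G t) \<le> MG"
  shows "integrable (lborel \<Otimes>\<^sub>M lborel) (\<lambda>(s,t). G t * kk s t * nderiv 2 \<phi> s)"
    and "\<And>s. integrable lborel (\<lambda>t. G t * kk s t * nderiv 2 \<phi> s)"
    and "\<And>t. integrable lborel (\<lambda>s. G t * kk s t * nderiv 2 \<phi> s)"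
proof -
  obtain C where C0: "C \<ge> 0" and C: "\<And>s t. norm (kk s t) \<le> C * (\<bar>s\<bar> + \<bar>s\<bar>^3) / (1 + t^2)"
    using kk_bound_C by blast
  have MG0: "MG \<ge> 0" using Gb[of 0] by (meson norm_ge_zero order_trans)
  define a where "a s = MG * C * (\<bar>s\<bar>^1 * norm (nderiv 2 \<phi> s) + \<bar>s\<bar>^3 * norm (nderiv 2 \<phi> s))" for s
  define b where "b t = inverse (1 + t^2)" for t :: real
  have ai: "integrable lborel a" unfolding a_def
    by (intro integrable_mult_right Bochner_Integration.integrable_add schwartz_integrable[OF \<phi>])
  have bi: "integrable lborel b" unfolding b_def by (rule integrable_inv1p)
  have [measurable]: "G \<in> borel_measurable borel" using Gm by simp
  have [measurable]: "nderiv 2 \<phi> \<in> borel_measurable borel" by (rule schwartz_meas[OF \<phi>])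
  have bd: "norm (G t * kk s t * nderiv 2 \<phi> s) \<le> a s * b t" for s t
  proof -
    have "norm (G t * kk s t * nderiv 2 \<phi> s) = norm (G t) * norm (kk s t) * norm (nderiv 2 \<phi> s)"
      by (simp add: norm_mult)
    also have "\<dots> \<le> MG * (C * (\<bar>s\<bar> + \<bar>s\<bar>^3) / (1 + t^2)) * norm (nderiv 2 \<phi> s)"
      by (intro mult_mono Gb C) (auto simp: MG0 C0 add_pos_nonneg)
    also have "\<dots> = a s * b t" by (simp add: a_def b_def divide_inverse algebra_simps)
    finally show ?thesis .
  qed
  have km: "(\<lambda>(s,t). kk s t) \<in> borel_measurable (lborel \<Otimes>\<^sub>M lborel)" by (rule kk_meas)
  have m: "(\<lambda>(s,t). G t * kk s t * nderiv 2 \<phi> s) \<in> borel_measurable (lborel \<Otimes>\<^sub>M lborel)"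
  proof -
    have "(\<lambda>p. G (snd p) * (case p of (s,t) \<Rightarrow> kk s t) * nderiv 2 \<phi> (fst p)) \<in> borel_measurable (lborel \<Otimes>\<^sub>M lborel)"
      using km by measurable
    then show ?thesis by (simp add: case_prod_beta')
  qed
  show "integrable (lborel \<Otimes>\<^sub>M lborel) (\<lambda>(s,t). G t * kk s t * nderiv 2 \<phi> s)"
    by (rule bound_prod_integrable[OF m bd ai bi])
  have mp: "(\<lambda>p. G (snd p) * kk (fst p) (snd p) * nderiv 2 \<phi> (fst p)) \<in> borel_measurable borel"
    using m by (simp add: lborel_prod case_prod_beta')
  show "integrable lborel (\<lambda>t. G t * kk s t * nderiv 2 \<phi> s)" for s
  proof (rule Bochner_Integration.integrable_bound[OF integrable_mult_right[OF bi, of "a s"]])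
    show "(\<lambda>t. G t * kk s t * nderiv 2 \<phi> s) \<in> borel_measurable lborel"
      using measurable_Pair2[OF m, of s] by simp
    show "AE t in lborel. norm (G t * kk s t * nderiv 2 \<phi> s) \<le> norm (a s * b t)"
      using bd by (auto intro: order_trans[OF _ abs_ge_self])
  qed
  show "integrable lborel (\<lambda>s. G t * kk s t * nderiv 2 \<phi> s)" for t
  proof (rule Bochner_Integration.integrable_bound[OF integrable_mult_left[OF ai, of "b t"]])
    show "(\<lambda>s. G t * kk s t * nderiv 2 \<phi> s) \<in> borel_measurable lborel"
      using measurable_Pair1[OF m, of t] by simp
    show "AE s in lborel. norm (G t * kk s t * nderiv 2 \<phi> s) \<le> norm (a s * b t)"
      using bd by (auto intro: order_trans[OF _ abs_ge_self])
  qed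
qed


definition vd :: "real \<Rightarrow> real \<Rightarrow> complex" where
  "vd s t = (if t = 0 then complex_of_real s else
     (- \<i> * complex_of_real t + \<i> * complex_of_real t * exp (- \<i> * complex_of_real (s*t))) / complex_of_real (t^2))"

lemma v_ds: "((\<lambda>s. v s t) has_vector_derivative vd s t) (at s)"
proof (cases "t = 0")
  case True
  have "((\<lambda>s. complex_of_real (s^2/2)) has_vector_derivative complex_of_real s) (at s)"
    by (rule derivative_eq_intros refl | simp)+
  then show ?thesis using True by (simp add: v_def vd_def)
next
  case False
  define T where "T = complex_of_real t"
  have T0: "T \<noteq> 0" using False by (simp add: T_def)
  define f where "f z = (1 - \<i> * (z * T) - exp (- \<i> * (z * T))) / T^2" for z
  have "(f has_field_derivative ((- \<i> * T + \<i> * T * exp (- \<i> * (complex_of_real s * T))) / T^2)) (at (complex_of_real s))"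
    unfolding f_def by (rule derivative_eq_intros refl)+ (use T0 in \<open>simp_all add: field_simps power2_eq_square\<close>)
  from has_vector_derivative_real_field[OF this, of UNIV]
  have "((\<lambda>x. f (complex_of_real x)) has_vector_derivative ((- \<i> * T + \<i> * T * exp (- \<i> * (complex_of_real s * T))) / T^2)) (at s)"
    by simp
  moreover have "(\<lambda>x. f (complex_of_real x)) = (\<lambda>s. v s t)"
    using False by (simp add: fun_eq_iff f_def v_def T_def)
  moreover have "(- \<i> * T + \<i> * T * exp (- \<i> * (complex_of_real s * T))) / T^2 = vd s t"
    using False by (simp add: vd_def T_def)
  ultimately show ?thesis by simp
qed

lemma vd_ds: "((\<lambda>s. vd s t) has_vector_derivative exp (- \<i> * complex_of_real (s*t))) (at s)"
proof (cases "t = 0")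
  case True
  have "((\<lambda>s. complex_of_real s) has_vector_derivative complex_of_real 1) (at s)"
    by (rule derivative_eq_intros refl | simp)+
  then show ?thesis using True by (simp add: vd_def)
next
  case False
  define T where "T = complex_of_real t"
  have T0: "T \<noteq> 0" using False by (simp add: T_def)
  define f where "f z = (- \<i> * T + \<i> * T * exp (- \<i> * (z * T))) / T^2" for z
  have "(f has_field_derivative exp (- \<i> * (complex_of_real s * T))) (at (complex_of_real s))"
    unfolding f_def by (rule derivative_eq_intros refl)+ (use T0 in \<open>simp_all add: field_simps power2_eq_square\<close>)
  from has_vector_derivative_real_field[OF this, of UNIV]
  have "((\<lambda>x. f (complex_of_real x)) has_vector_derivative exp (- \<i> * (complex_of_real s * T))) (at s)"
    by simp
  moreover have "(\<lambda>x. f (complex_of_real x)) = (\<lambda>s. vd s t)"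
    using False by (simp add: fun_eq_iff f_def vd_def T_def)
  ultimately show ?thesis by (simp add: T_def)
qed


lemma cont_meas: "(\<And>x. isCont f x) \<Longrightarrow> (f :: real \<Rightarrow> complex) \<in> borel_measurable lborel"
proof -
  assume "\<And>x. isCont f x"
  then have "continuous_on UNIV f" by (intro continuous_at_imp_continuous_on) auto
  then have "f \<in> borel_measurable borel" by (rule borel_measurable_continuous_onI)
  then show ?thesis by simp
qed

lemma v_bound: "\<exists>MW\<ge>0. \<forall>s t. norm (v s t) \<le> MW * s^2"
proof -
  obtain M where M: "\<And>u. norm (v 1 u) \<le> M" using v1_bounded by blast
  have M0: "M \<ge> 0" using M[of 0] by (meson norm_ge_zero order_trans)
  have "norm (v s t) \<le> M * s^2" for s t
  proof -
    have "norm (v s t) = s^2 * norm (v 1 (s*t))" by (simp only: v_scale[of s t] norm_mult norm_of_real abs_power2)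
    also have "\<dots> \<le> s^2 * M" by (rule mult_left_mono[OF M]) simp
    finally show ?thesis by (simp add: mult.commute)
  qed
  then show ?thesis using M0 by blast
qed

lemma vd_bound: "\<exists>c. \<forall>s. norm (vd s t) \<le> \<bar>s\<bar> + c"
proof (cases "t = 0")
  case True then show ?thesis by (intro exI[of _ 0]) (simp add: vd_def)
next
  case False
  have "norm (vd s t) \<le> \<bar>s\<bar> + 2 / \<bar>t\<bar>" for s
  proof -
    have n: "norm (- \<i> * complex_of_real t + \<i> * complex_of_real t * exp (- \<i> * complex_of_real (s*t))) \<le> 2 * \<bar>t\<bar>"
    proof -
      have "norm (- \<i> * complex_of_real t + \<i> * complex_of_real t * exp (- \<i> * complex_of_real (s*t)))
          \<le> norm (- \<i> * complex_of_real t) + norm (\<i> * complex_of_real t * exp (- \<i> * complex_of_real (s*t)))"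
        by (rule norm_triangle_ineq)
      also have "\<dots> = 2 * \<bar>t\<bar>" by (simp add: norm_mult norm_e)
      finally show ?thesis .
    qed
    have "norm (vd s t) = norm (- \<i> * complex_of_real t + \<i> * complex_of_real t * exp (- \<i> * complex_of_real (s*t))) / t^2"
      using False by (simp only: vd_def if_False norm_divide norm_of_real abs_power2)
    also have "\<dots> \<le> 2 * \<bar>t\<bar> / t^2" by (rule divide_right_mono[OF n]) simp
    also have "\<dots> = 2 / \<bar>t\<bar>"
    proof -
      have eq: "t^2 = \<bar>t\<bar> * \<bar>t\<bar>" by (simp add: abs_mult_self_eq power2_eq_square)
      show ?thesis unfolding eq using False by (simp add: field_simps)
    qed
    finally show ?thesis by simp
  qed
  then show ?thesis by blast
qed

lemma isCont_v_s: "isCont (\<lambda>s. v s t) s"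
  using v_ds has_vector_derivative_continuous by blast

lemma stepP:
  assumes \<phi>: "schwartz \<phi>"
  shows "integrable lborel (\<lambda>s. v s t * nderiv 2 \<phi> s)"
    and "integral UNIV (\<lambda>s. v s t * nderiv 2 \<phi> s) = fourier \<phi> t"
proof -
  obtain MW where MW0: "MW \<ge> 0" and MW: "\<And>s t. norm (v s t) \<le> MW * s^2" using v_bound by blast
  obtain c where c: "\<And>s. norm (vd s t) \<le> \<bar>s\<bar> + c" using vd_bound by blast
  define e where "e s = exp (- \<i> * complex_of_real (s*t))" for s
  have ne: "norm (e s) = 1" for s by (simp add: e_def norm_e)
  have d0: "(\<phi> has_vector_derivative nderiv 1 \<phi> s) (at s)" for s
    using schwartz_deriv[OF \<phi>, of 0 s] by simp
  have d1: "(nderiv 1 \<phi> has_vector_derivative nderiv 2 \<phi> s) (at s)" for s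
    using schwartz_deriv[OF \<phi>, of 1 s] by (simp add: numeral_2_eq_2)
  define G where "G s = v s t * nderiv 1 \<phi> s - vd s t * \<phi> s" for s
  have dG: "(G has_vector_derivative (v s t * nderiv 2 \<phi> s - e s * \<phi> s)) (at s)" for s
  proof -
    have a: "((\<lambda>s. v s t * nderiv 1 \<phi> s) has_vector_derivative (v s t * nderiv 2 \<phi> s + vd s t * nderiv 1 \<phi> s)) (at s)"
      by (rule has_vector_derivative_mult[OF v_ds d1])
    have b: "((\<lambda>s. vd s t * \<phi> s) has_vector_derivative (vd s t * nderiv 1 \<phi> s + e s * \<phi> s)) (at s)"
      unfolding e_def by (rule has_vector_derivative_mult[OF vd_ds d0])
    have dd: "(G has_vector_derivative ((v s t * nderiv 2 \<phi> s + vd s t * nderiv 1 \<phi> s) - (vd s t * nderiv 1 \<phi> s + e s * \<phi> s))) (at s)"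
      unfolding G_def by (rule has_vector_derivative_diff[OF a b])
    have eq: "(v s t * nderiv 2 \<phi> s + vd s t * nderiv 1 \<phi> s) - (vd s t * nderiv 1 \<phi> s + e s * \<phi> s)
        = v s t * nderiv 2 \<phi> s - e s * \<phi> s" by (simp add: algebra_simps)
    show ?thesis using dd unfolding eq .
  qed
  have c0: "isCont \<phi> s" for s using schwartz_cont[OF \<phi>, where n=0 and t=s] by simp
  have c2: "isCont (nderiv 2 \<phi>) s" for s by (rule schwartz_cont[OF \<phi>])
  have ce: "isCont e s" for s unfolding e_def by (intro continuous_intros)
  show I1: "integrable lborel (\<lambda>s. v s t * nderiv 2 \<phi> s)"
  proof (rule schwartz_integrable_c[OF \<phi>, where c=MW and m=2 and n=2])
    show "(\<lambda>s. v s t * nderiv 2 \<phi> s) \<in> borel_measurable lborel"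
      by (rule cont_meas, rule continuous_mult[OF isCont_v_s c2])
    show "norm (v s t * nderiv 2 \<phi> s) \<le> MW * (\<bar>s\<bar>^2 * norm (nderiv 2 \<phi> s))" for s
    proof -
      have "norm (v s t) * norm (nderiv 2 \<phi> s) \<le> (MW * s^2) * norm (nderiv 2 \<phi> s)"
        by (rule mult_right_mono[OF MW]) simp
      then show ?thesis by (simp add: norm_mult mult.assoc)
    qed
  qed
  have I2: "integrable lborel (\<lambda>s. e s * \<phi> s)"
  proof (rule schwartz_integrable_c[OF \<phi>, where c=1 and m=0 and n=0])
    show "(\<lambda>s. e s * \<phi> s) \<in> borel_measurable lborel"
      by (rule cont_meas, rule continuous_mult[OF ce c0])
    show "norm (e s * \<phi> s) \<le> 1 * (\<bar>s\<bar>^0 * norm (nderiv 0 \<phi> s))" for s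
      by (simp add: norm_mult ne)
  qed
  have lim: "(G \<longlongrightarrow> 0) F" if F: "F = at_top \<or> F = at_bot" for F
  proof (rule Lim_null_comparison)
    let ?g = "\<lambda>s. MW * (\<bar>s\<bar>^2 * norm (nderiv 1 \<phi> s)) + \<bar>s\<bar>^1 * norm (nderiv 0 \<phi> s) + c * (\<bar>s\<bar>^0 * norm (nderiv 0 \<phi> s))"
    show "eventually (\<lambda>s. norm (G s) \<le> ?g s) F"
    proof (rule always_eventually, rule allI)
      fix s
      have "norm (G s) \<le> norm (v s t * nderiv 1 \<phi> s) + norm (vd s t * \<phi> s)"
        unfolding G_def by (rule norm_triangle_ineq4)
      also have "\<dots> \<le> MW * s^2 * norm (nderiv 1 \<phi> s) + (\<bar>s\<bar> + c) * norm (\<phi> s)"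
        unfolding norm_mult
        by (rule add_mono[OF mult_right_mono[OF MW norm_ge_zero] mult_right_mono[OF c norm_ge_zero]])
      also have "\<dots> = ?g s" by (simp add: algebra_simps)
      finally show "norm (G s) \<le> ?g s" .
    qed
    have t: "((\<lambda>s. \<bar>s\<bar>^m * norm (nderiv n \<phi> s)) \<longlongrightarrow> 0) F" for m n
      using F schwartz_tendsto(1)[OF \<phi>, of m n] schwartz_tendsto(2)[OF \<phi>, of m n] by (elim disjE) simp_all
    show "(?g \<longlongrightarrow> 0) F"
      using tendsto_add[OF tendsto_add[OF tendsto_mult_right_zero[OF t[of 2 1], of MW] t[of 1 0]] tendsto_mult_right_zero[OF t[of 0 0], of c]]
      by simp
  qed
  have "integral UNIV (\<lambda>s. v s t * nderiv 2 \<phi> s - e s * \<phi> s) = 0"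
  proof (rule ibp_UNIV_zero[OF dG])
    show "(\<lambda>s. v s t * nderiv 2 \<phi> s - e s * \<phi> s) integrable_on UNIV"
      by (rule integrable_on_lborel) (intro Bochner_Integration.integrable_diff I1 I2)
    show "(G \<longlongrightarrow> 0) at_top" by (rule lim) simp
    show "(G \<longlongrightarrow> 0) at_bot" by (rule lim) simp
  qed
  moreover have "integral UNIV (\<lambda>s. v s t * nderiv 2 \<phi> s - e s * \<phi> s) = integral UNIV (\<lambda>s. v s t * nderiv 2 \<phi> s) - integral UNIV (\<lambda>s. e s * \<phi> s)"
    by (rule integral_diff[OF integrable_on_lborel[OF I1] integrable_on_lborel[OF I2]])
  ultimately have "integral UNIV (\<lambda>s. v s t * nderiv 2 \<phi> s) = integral UNIV (\<lambda>s. e s * \<phi> s)"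
    by simp
  also have "\<dots> = fourier \<phi> t" unfolding fourier_def e_def by (simp only: mult.commute[of _ t])
  finally show "integral UNIV (\<lambda>s. v s t * nderiv 2 \<phi> s) = fourier \<phi> t" .
qed


definition H :: "(real \<Rightarrow> complex) \<Rightarrow> real \<Rightarrow> complex" where
  "H \<phi> t = integral UNIV (\<lambda>s. kk s t * nderiv 2 \<phi> s)"

lemma H_integrable:
  assumes \<phi>: "schwartz \<phi>" shows "integrable lborel (H \<phi>)"
proof -
  have "integrable lborel (\<lambda>t. integral UNIV (\<lambda>s. (\<lambda>_. 1::complex) t * kk s t * nderiv 2 \<phi> s))"
    by (rule fubini_HK(3)[OF P_facts(1)[OF \<phi>] P_facts(2)[OF \<phi>] P_facts(3)[OF \<phi>]]) auto
  then show ?thesis by (simp add: H_def[abs_def])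
qed

lemma indicator_mult_eq: "(\<lambda>t. indicator S t * f t) = (\<lambda>t. if t \<in> S then f t else (0::complex))"
  by (auto simp: indicator_def)

lemma stepQ:
  assumes \<phi>: "schwartz \<phi>" and xy: "x \<le> y"
  shows "fourier \<phi> y - fourier \<phi> x = integral {x..y} (H \<phi>)"
proof -
  define G :: "real \<Rightarrow> complex" where "G = indicator {x..y}"
  have Gm: "G \<in> borel_measurable lborel" unfolding G_def by measurable
  have Gb: "norm (G t) \<le> 1" for t by (simp add: G_def indicator_def)
  note P = P_facts[OF \<phi> Gm Gb]
  have fub: "integral UNIV (\<lambda>s. integral UNIV (\<lambda>t. G t * kk s t * nderiv 2 \<phi> s))
      = integral UNIV (\<lambda>t. integral UNIV (\<lambda>s. G t * kk s t * nderiv 2 \<phi> s))"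
    by (rule fubini_HK(1)[OF P(1) P(2) P(3)])
  have in1: "integral UNIV (\<lambda>t. G t * kk s t * nderiv 2 \<phi> s) = v s y * nderiv 2 \<phi> s - v s x * nderiv 2 \<phi> s" for s
  proof -
    have "integral UNIV (\<lambda>t. G t * kk s t * nderiv 2 \<phi> s) = integral UNIV (\<lambda>t. G t * kk s t) * nderiv 2 \<phi> s"
      by (rule integral_mult_left)
    also have "integral UNIV (\<lambda>t. G t * kk s t) = integral {x..y} (kk s)"
      unfolding G_def indicator_mult_eq by (rule integral_restrict_UNIV)
    also have "\<dots> = v s y - v s x" by (rule v_FTC[OF xy, symmetric])
    finally show ?thesis by (simp add: algebra_simps)
  qed
  have in2: "integral UNIV (\<lambda>s. G t * kk s t * nderiv 2 \<phi> s) = G t * H \<phi> t" for t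
  proof -
    have "integral UNIV (\<lambda>s. G t * kk s t * nderiv 2 \<phi> s) = integral UNIV (\<lambda>s. G t * (kk s t * nderiv 2 \<phi> s))"
      by (simp add: mult.assoc)
    also have "\<dots> = G t * H \<phi> t" unfolding H_def by (rule integral_mult_right)
    finally show ?thesis .
  qed
  have "integral UNIV (\<lambda>s. v s y * nderiv 2 \<phi> s - v s x * nderiv 2 \<phi> s)
      = integral UNIV (\<lambda>s. v s y * nderiv 2 \<phi> s) - integral UNIV (\<lambda>s. v s x * nderiv 2 \<phi> s)"
    by (rule integral_diff[OF integrable_on_lborel[OF stepP(1)[OF \<phi>]] integrable_on_lborel[OF stepP(1)[OF \<phi>]]])
  also have "\<dots> = fourier \<phi> y - fourier \<phi> x" by (simp only: stepP(2)[OF \<phi>])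
  finally have L: "integral UNIV (\<lambda>s. integral UNIV (\<lambda>t. G t * kk s t * nderiv 2 \<phi> s)) = fourier \<phi> y - fourier \<phi> x"
    by (simp only: in1)
  have R: "integral UNIV (\<lambda>t. integral UNIV (\<lambda>s. G t * kk s t * nderiv 2 \<phi> s)) = integral {x..y} (H \<phi>)"
    unfolding in2 unfolding G_def indicator_mult_eq by (rule integral_restrict_UNIV)
  show ?thesis using fub L R by simp
qed

lemma v_decay: "t \<noteq> 0 \<Longrightarrow> norm (v s t) \<le> (2 + \<bar>s\<bar> * \<bar>t\<bar>) / t^2"
proof (cases "s = 0")
  case True
  assume "t \<noteq> 0"
  then show ?thesis using True by (simp add: v_scale[of 0 t] add_pos_nonneg)
next
  case False
  assume t: "t \<noteq> 0"
  have "norm (v s t) = s^2 * norm (v 1 (s*t))" by (simp only: v_scale[of s t] norm_mult norm_of_real abs_power2)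
  also have "\<dots> \<le> s^2 * ((2 + \<bar>s*t\<bar>) / (s*t)^2)" by (rule mult_left_mono[OF v1_bound_far]) (use False t in auto)
  also have "\<dots> = (2 + \<bar>s\<bar> * \<bar>t\<bar>) / t^2" using False t by (simp add: abs_mult power_mult_distrib)
  finally show ?thesis .
qed

lemma fourier_tendsto:
  assumes \<phi>: "schwartz \<phi>" shows "(fourier \<phi> \<longlongrightarrow> 0) at_top"
proof (rule Lim_null_comparison)
  define f0 where "f0 s = \<bar>s\<bar>^0 * norm (nderiv 2 \<phi> s)" for s
  define f1 where "f1 s = \<bar>s\<bar>^1 * norm (nderiv 2 \<phi> s)" for s
  have i0: "integrable lborel f0" unfolding f0_def by (rule schwartz_integrable[OF \<phi>])
  have i1: "integrable lborel f1" unfolding f1_def by (rule schwartz_integrable[OF \<phi>])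
  define A0 where "A0 = integral UNIV f0"
  define A1 where "A1 = integral UNIV f1"
  show "eventually (\<lambda>t. norm (fourier \<phi> t) \<le> (2 / t^2) * A0 + (1 / t) * A1) at_top"
    using eventually_gt_at_top[of 0]
  proof eventually_elim
    case (elim t)
    have "norm (fourier \<phi> t) = norm (integral UNIV (\<lambda>s. v s t * nderiv 2 \<phi> s))" by (simp only: stepP(2)[OF \<phi>])
    also have "\<dots> \<le> integral UNIV (\<lambda>s. (2 / t^2) * f0 s + (1 / t) * f1 s)"
    proof (rule integral_norm_bound_integral)
      show "(\<lambda>s. v s t * nderiv 2 \<phi> s) integrable_on UNIV" by (rule integrable_on_lborel[OF stepP(1)[OF \<phi>]])
      show "(\<lambda>s. (2 / t^2) * f0 s + (1 / t) * f1 s) integrable_on UNIV"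
        by (rule integrable_on_lborel) (intro Bochner_Integration.integrable_add integrable_mult_right i0 i1)
      fix s
      have "norm (v s t * nderiv 2 \<phi> s) \<le> ((2 + \<bar>s\<bar> * \<bar>t\<bar>) / t^2) * norm (nderiv 2 \<phi> s)"
        unfolding norm_mult by (rule mult_right_mono[OF v_decay]) (use elim in auto)
      also have "\<dots> = (2 / t^2) * f0 s + (1 / t) * f1 s"
        using elim by (simp add: f0_def f1_def field_simps power2_eq_square)
      finally show "norm (v s t * nderiv 2 \<phi> s) \<le> (2 / t^2) * f0 s + (1 / t) * f1 s" .
    qed
    also have "\<dots> = integral UNIV (\<lambda>s. (2 / t^2) * f0 s) + integral UNIV (\<lambda>s. (1 / t) * f1 s)"
      by (rule integral_add) (intro integrable_on_mult_right integrable_on_lborel i0 i1)+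
    also have "\<dots> = (2 / t^2) * A0 + (1 / t) * A1"
      unfolding A0_def A1_def by (simp only: Henstock_Kurzweil_Integration.integral_mult_right)
    finally show ?case .
  qed
  show "((\<lambda>t. (2 / t^2) * A0 + (1 / t) * A1) \<longlongrightarrow> 0) at_top" by real_asymp
qed


lemma kk_integrable_t: "integrable lborel (kk s)"
proof -
  obtain C where C0: "C \<ge> 0" and C: "\<And>s t. norm (kk s t) \<le> C * (\<bar>s\<bar> + \<bar>s\<bar>^3) / (1 + t^2)"
    using kk_bound_C by blast
  show ?thesis
  proof (rule integrable_decay[OF cont_meas C])
    fix t show "isCont (kk s) t"
      unfolding kk_def by (intro continuous_intros isCont_o2[where g=Kf, OF _ isCont_Kf])
  qed
qed

lemma v_tendsto: "((\<lambda>t. v s t) \<longlongrightarrow> 0) at_top"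
proof (rule Lim_null_comparison)
  show "eventually (\<lambda>t. norm (v s t) \<le> (2 + \<bar>s\<bar> * \<bar>t\<bar>) / t^2) at_top"
    using eventually_gt_at_top[of 0] by eventually_elim (rule v_decay, simp)
  show "((\<lambda>t. (2 + \<bar>s\<bar> * \<bar>t\<bar>) / t^2) \<longlongrightarrow> 0) at_top" by real_asymp
qed

lemma Omega_eq: "Bc F \<Longrightarrow> Omega F s = - integral UNIV (\<lambda>t. F t * kk s t)"
  unfolding Omega_def
  using Ac_eq[of F "v s" "kk s" 0] v_FTC kk_integrable_t v_tendsto by simp

theorem mainTheorem3:
  fixes F :: "real \<Rightarrow> complex" and \<phi> :: "real \<Rightarrow> complex"
  assumes "Bc F" and "schwartz \<phi>"
  shows "integral UNIV (\<lambda>s. Omega F s * nderiv 2 \<phi> s) = Ac_integral F (fourier \<phi>)"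
proof -
  note F = assms(1) and \<phi> = assms(2)
  obtain MF where MF: "\<And>t. norm (F t) \<le> MF" using Bc_bounded[OF F] by blast
  have Fm: "F \<in> borel_measurable lborel"
    using F unfolding Bc_def by (simp add: borel_measurable_continuous_onI)
  note P = P_facts[OF \<phi> Fm MF]
  have "integral UNIV (\<lambda>s. Omega F s * nderiv 2 \<phi> s)
      = integral UNIV (\<lambda>s. - integral UNIV (\<lambda>t. F t * kk s t * nderiv 2 \<phi> s))"
  proof -
    have "Omega F s * nderiv 2 \<phi> s = - integral UNIV (\<lambda>t. F t * kk s t * nderiv 2 \<phi> s)" for s
      unfolding Omega_eq[OF F] by (simp only: integral_mult_left mult_minus_left)
    then show ?thesis by simp
  qed
  also have "\<dots> = - integral UNIV (\<lambda>s. integral UNIV (\<lambda>t. F t * kk s t * nderiv 2 \<phi> s))"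
    by (rule integral_neg)
  also have "\<dots> = - integral UNIV (\<lambda>t. integral UNIV (\<lambda>s. F t * kk s t * nderiv 2 \<phi> s))"
    by (simp only: fubini_HK(1)[OF P(1) P(2) P(3)])
  also have "\<dots> = - integral UNIV (\<lambda>t. F t * H \<phi> t)"
  proof -
    have "integral UNIV (\<lambda>s. F t * kk s t * nderiv 2 \<phi> s) = F t * H \<phi> t" for t
    proof -
      have "integral UNIV (\<lambda>s. F t * kk s t * nderiv 2 \<phi> s) = integral UNIV (\<lambda>s. F t * (kk s t * nderiv 2 \<phi> s))"
        by (simp add: mult.assoc)
      also have "\<dots> = F t * H \<phi> t" unfolding H_def by (rule integral_mult_right)
      finally show ?thesis .
    qed
    then show ?thesis by simp
  qed
  also have "\<dots> = Ac_integral F (fourier \<phi>)"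
    using Ac_eq[OF F stepQ[OF \<phi>] H_integrable[OF \<phi>] fourier_tendsto[OF \<phi>]] by simp
  finally show ?thesis .
qed


end
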